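(* Let $m,n\ge 3$ be (not necessarily distinct) integers. Then the strong product $C_m\boxtimes C_n$ is $\mathbb{Z}_{mn}$-distance antimagic if and only if both $m$ and $n$ are odd.
   Context: $C_n$ is the cycle of length $n$. The strong product $G_1\boxtimes G_2$ has vertex set $V(G_1)\times V(G_2)$, with distinct $(x_1,x_2),(y_1,y_2)$ adjacent iff for each $i$ either $x_i=y_i$ or $x_iy_i\in E(G_i)$. For a graph $G$ with $N$ vertices, a $\mathbb{Z}_N$-distance antimagic labelling is a bijection $f:V(G)\to\mathbb{Z}_N$ such that the weights $w_f(x)=\sum_{y\in N(x)} f(y)$ (mod $N$, $N(x)$ the open neighbourhood) are pairwise distinct; $G$ is $\mathbb{Z}_N$-distance antimagic if such a labelling exists. *)

theory Defs
  imports Main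
begin

definition cycle_adj :: "nat \<Rightarrow> nat \<Rightarrow> nat \<Rightarrow> bool" where
  "cycle_adj n i j \<longleftrightarrow> i < n \<and> j < n \<and> (j = (i + 1) mod n \<or> i = (j + 1) mod n)"

definition strong_adj ::
  "('a \<Rightarrow> 'a \<Rightarrow> bool) \<Rightarrow> ('b \<Rightarrow> 'b \<Rightarrow> bool) \<Rightarrow> 'a \<times> 'b \<Rightarrow> 'a \<times> 'b \<Rightarrow> bool" where
  "strong_adj E1 E2 x y \<longleftrightarrow> x \<noteq> y \<and>
     (fst x = fst y \<or> E1 (fst x) (fst y)) \<and> (snd x = snd y \<or> E2 (snd x) (snd y))"

definition nbhd :: "'v set \<Rightarrow> ('v \<Rightarrow> 'v \<Rightarrow> bool) \<Rightarrow> 'v \<Rightarrow> 'v set" where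
  "nbhd V E x = {y \<in> V. E x y}"

text \<open>Z_N-distance antimagic labelling, N = |V|: a bijection onto Z_N (represented
by {0..<N}) whose neighbourhood sums mod N are pairwise distinct.\<close>
definition ZN_distance_antimagic_labelling :: "'v set \<Rightarrow> ('v \<Rightarrow> 'v \<Rightarrow> bool) \<Rightarrow> ('v \<Rightarrow> nat) \<Rightarrow> bool" where
  "ZN_distance_antimagic_labelling V E f \<longleftrightarrow>
     bij_betw f V {0..<card V} \<and>
     inj_on (\<lambda>x. (\<Sum>y\<in>nbhd V E x. f y) mod card V) V"

definition ZN_distance_antimagic :: "'v set \<Rightarrow> ('v \<Rightarrow> 'v \<Rightarrow> bool) \<Rightarrow> bool" where
  "ZN_distance_antimagic V E \<longleftrightarrow> (\<exists>f. ZN_distance_antimagic_labelling V E f)"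

end

theory Submission imports Defs begin

definition pr :: "nat \<Rightarrow> nat \<Rightarrow> nat" where "pr k i = (if i = 0 then k - 1 else i - 1)"
definition su :: "nat \<Rightarrow> nat \<Rightarrow> nat" where "su k i = (if i = k - 1 then 0 else i + 1)"
definition nb3 :: "nat \<Rightarrow> nat \<Rightarrow> nat set" where "nb3 k i = {pr k i, i, su k i}"

lemma cyc_adj_iff:
  assumes "k \<ge> 3" "i < k"
  shows "cycle_adj k i i' \<longleftrightarrow> i' = pr k i \<or> i' = su k i"
proof -
  have m1: "(x + 1) mod k = (if x = k - 1 then 0 else x + 1)" if "x < k" for x
    using that assms by (auto simp: mod_if)
  show ?thesis
  proof (cases "i' < k")
    case True
    have a: "(i+1) mod k = (if i = k - 1 then 0 else i + 1)" by (rule m1[OF assms(2)])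
    have b: "(i'+1) mod k = (if i' = k - 1 then 0 else i' + 1)" by (rule m1[OF True])
    show ?thesis unfolding cycle_adj_def pr_def su_def a b using assms True by auto
  next
    case False
    then show ?thesis unfolding cycle_adj_def pr_def su_def using assms by auto
  qed
qed

lemma nb3_props:
  assumes "k \<ge> 3" "i < k"
  shows "card (nb3 k i) = 3" "nb3 k i \<subseteq> {0..<k}" "i \<in> nb3 k i" "finite (nb3 k i)"
    "sum id (nb3 k i) mod k = (3 * i) mod k"
proof -
  have d: "pr k i \<noteq> i" "su k i \<noteq> i" "pr k i \<noteq> su k i"
    using assms unfolding pr_def su_def by auto
  show "card (nb3 k i) = 3" using d unfolding nb3_def by auto
  show "nb3 k i \<subseteq> {0..<k}" using assms unfolding nb3_def pr_def su_def by auto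
  show "i \<in> nb3 k i" unfolding nb3_def by auto
  show "finite (nb3 k i)" unfolding nb3_def by auto
  have s: "sum id (nb3 k i) = pr k i + i + su k i" using d unfolding nb3_def by auto
  show "sum id (nb3 k i) mod k = (3 * i) mod k"
  proof (cases "i = 0")
    case True then show ?thesis using assms unfolding s pr_def su_def by auto
  next
    case False
    show ?thesis
    proof (cases "i = k - 1")
      case True
      have "pr k i + i + su k i + k = 3 * i" using True False assms unfolding pr_def su_def by auto
      then show ?thesis unfolding s by (metis mod_add_self2)
    next
      case False2: False
      have "pr k i + i + su k i = 3 * i" using False False2 assms unfolding pr_def su_def by auto
      then show ?thesis by (metis s)
    qed
  qed
qed

lemma nbhd_eq:
  assumes "m \<ge> 3" "n \<ge> 3" "i < m" "j < n"
  shows "nbhd ({0..<m} \<times> {0..<n}) (strong_adj (cycle_adj m) (cycle_adj n)) (i, j)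
         = nb3 m i \<times> nb3 n j - {(i, j)}"
proof -
  have A: "i' \<in> nb3 m i \<longleftrightarrow> i' < m \<and> (i = i' \<or> cycle_adj m i i')" for i'
  proof -
    have "nb3 m i \<subseteq> {0..<m}" by (rule nb3_props(2)[OF assms(1,3)])
    then have "i' \<in> nb3 m i \<Longrightarrow> i' < m" by auto
    moreover have "i' \<in> nb3 m i \<longleftrightarrow> i' = pr m i \<or> i' = i \<or> i' = su m i" unfolding nb3_def by simp
    ultimately show ?thesis using cyc_adj_iff[OF assms(1,3), of i'] by blast
  qed
  have B: "j' \<in> nb3 n j \<longleftrightarrow> j' < n \<and> (j = j' \<or> cycle_adj n j j')" for j'
  proof -
    have "nb3 n j \<subseteq> {0..<n}" by (rule nb3_props(2)[OF assms(2,4)])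
    then have "j' \<in> nb3 n j \<Longrightarrow> j' < n" by auto
    moreover have "j' \<in> nb3 n j \<longleftrightarrow> j' = pr n j \<or> j' = j \<or> j' = su n j" unfolding nb3_def by simp
    ultimately show ?thesis using cyc_adj_iff[OF assms(2,4), of j'] by blast
  qed
  show ?thesis
  proof (rule set_eqI)
    fix z :: "nat \<times> nat"
    obtain a b where z: "z = (a, b)" by (cases z)
    show "z \<in> nbhd ({0..<m} \<times> {0..<n}) (strong_adj (cycle_adj m) (cycle_adj n)) (i, j)
         \<longleftrightarrow> z \<in> nb3 m i \<times> nb3 n j - {(i, j)}"
      unfolding z nbhd_def strong_adj_def using A[of a] B[of b] by auto
  qed
qed

lemma sym_adj: "strong_adj (cycle_adj m) (cycle_adj n) x y = strong_adj (cycle_adj m) (cycle_adj n) y x"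
  unfolding strong_adj_def cycle_adj_def by auto

lemma card_nbhd:
  assumes "m \<ge> 3" "n \<ge> 3" "x \<in> {0..<m} \<times> {0..<n}"
  shows "card (nbhd ({0..<m} \<times> {0..<n}) (strong_adj (cycle_adj m) (cycle_adj n)) x) = 8"
proof -
  obtain i j where x: "x = (i, j)" "i < m" "j < n" using assms(3) by auto
  have "card (nb3 m i \<times> nb3 n j - {(i, j)}) = 8"
    using nb3_props[OF assms(1) x(2)] nb3_props[OF assms(2) x(3)]
    by (simp add: card_cartesian_product)
  then show ?thesis using nbhd_eq[OF assms(1,2) x(2,3)] x(1) by simp
qed

lemma double_count:
  assumes "finite V" "\<And>x y. E x y = E y x"
  shows "(\<Sum>x\<in>V. \<Sum>y\<in>nbhd V E x. f y) = (\<Sum>y\<in>V. f y * card (nbhd V E y))"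
proof -
  have "(\<Sum>x\<in>V. \<Sum>y\<in>nbhd V E x. f y) = (\<Sum>x\<in>V. \<Sum>y\<in>V. if E x y then f y else 0)"
    unfolding nbhd_def using assms(1) by (simp add: sum.inter_filter)
  also have "\<dots> = (\<Sum>y\<in>V. \<Sum>x\<in>V. if E y x then f y else 0)"
    by (subst sum.swap) (simp add: assms(2))
  also have "\<dots> = (\<Sum>y\<in>V. f y * card (nbhd V E y))"
  proof (rule sum.cong[OF refl])
    fix y assume "y \<in> V"
    have "(\<Sum>x\<in>V. if E y x then f y else 0) = (\<Sum>x\<in>nbhd V E y. f y)"
      unfolding nbhd_def using assms(1) by (rule sum.inter_filter[symmetric])
    also have "\<dots> = f y * card (nbhd V E y)" by simp
    finally show "(\<Sum>x\<in>V. if E y x then f y else 0) = f y * card (nbhd V E y)" .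
  qed
  finally show ?thesis .
qed

lemma odd_cancel:
  assumes "odd n" "int n dvd 8 * (int a - int b)" "a < n" "b < n"
  shows "a = b"
proof -
  have "coprime (int n) 2" using assms(1) by simp
  then have "coprime (int n) (2^3)" by (simp only: coprime_power_right_iff) simp
  then have c: "coprime (int n) 8" by simp
  have d: "int n dvd (int a - int b)"
    using assms(2) coprime_dvd_mult_left_iff[OF c, of "int a - int b"] by (simp add: mult.commute)
  show ?thesis
  proof (rule ccontr)
    assume "a \<noteq> b"
    then have "int a - int b \<noteq> 0" by simp
    from dvd_imp_le_int[OF this d] have "\<bar>int n\<bar> \<le> \<bar>int a - int b\<bar>" .
    then show False using assms(3,4) by linarith
  qed
qed

lemma double_gauss': "2 * (\<Sum>{0..<N::nat}) = N * (N - 1)"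
  by (induct N) (auto simp: algebra_simps)

lemma bij_lab:
  fixes m n :: nat
  assumes "n > 0"
  shows "bij_betw (\<lambda>(i, j). n * i + j) ({0..<m} \<times> {0..<n}) {0..<m * n}"
proof (rule bij_betw_byWitness[where f' = "\<lambda>k. (k div n, k mod n)"])
  show "\<forall>a\<in>{0..<m} \<times> {0..<n}. (\<lambda>k. (k div n, k mod n)) ((\<lambda>(i, j). n * i + j) a) = a"
    using assms by auto
  show "\<forall>a'\<in>{0..<m * n}. (\<lambda>(i, j). n * i + j) ((\<lambda>k. (k div n, k mod n)) a') = a'"
    by simp
  show "(\<lambda>(i, j). n * i + j) ` ({0..<m} \<times> {0..<n}) \<subseteq> {0..<m * n}"
  proof
    fix x assume "x \<in> (\<lambda>(i, j). n * i + j) ` ({0..<m} \<times> {0..<n})"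
    then obtain i j where "x = n * i + j" "i < m" "j < n" by auto
    moreover have "n * i + j < n * (i + 1)" using \<open>j < n\<close> by simp
    moreover have "n * (i + 1) \<le> n * m" using \<open>i < m\<close> by (intro mult_le_mono2) simp
    ultimately show "x \<in> {0..<m * n}" by (simp add: mult.commute)
  qed
  show "(\<lambda>k. (k div n, k mod n)) ` {0..<m * n} \<subseteq> {0..<m} \<times> {0..<n}"
    using assms by (auto simp: less_mult_imp_div_less)
qed

lemma weight_eq:
  assumes "m \<ge> 3" "n \<ge> 3" "i < m" "j < n"
  shows "(\<Sum>y\<in>nbhd ({0..<m} \<times> {0..<n}) (strong_adj (cycle_adj m) (cycle_adj n)) (i, j).
            (\<lambda>(a, b). n * a + b) y) + (n * i + j)
         = 3 * n * sum id (nb3 m i) + 3 * sum id (nb3 n j)"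
proof -
  let ?f = "\<lambda>(a, b). n * a + b"
  note A = nb3_props[OF assms(1,3)] and B = nb3_props[OF assms(2,4)]
  have fin: "finite (nb3 m i \<times> nb3 n j)" using A B by simp
  have mem: "(i, j) \<in> nb3 m i \<times> nb3 n j" using A B by simp
  have "sum ?f (nb3 m i \<times> nb3 n j) = ?f (i, j) + sum ?f (nb3 m i \<times> nb3 n j - {(i, j)})"
    by (rule sum.remove[OF fin mem])
  moreover have "sum ?f (nb3 m i \<times> nb3 n j) = (\<Sum>a\<in>nb3 m i. \<Sum>b\<in>nb3 n j. n * a + b)"
    by (simp add: sum.cartesian_product)
  moreover have "(\<Sum>a\<in>nb3 m i. \<Sum>b\<in>nb3 n j. n * a + b) = (\<Sum>a\<in>nb3 m i. 3 * n * a + sum id (nb3 n j))"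
    using B by (simp add: sum.distrib mult.assoc)
  moreover have "(\<Sum>a\<in>nb3 m i. 3 * n * a + sum id (nb3 n j)) = 3 * n * sum id (nb3 m i) + 3 * sum id (nb3 n j)"
    using A by (simp add: sum.distrib sum_distrib_left mult.assoc)
  ultimately show ?thesis using nbhd_eq[OF assms] by simp
qed

lemma int_cong:
  assumes "(a::nat) mod k = b mod k"
  shows "int k dvd int a - int b"
proof -
  have "int a mod int k = int b mod int k" using assms by (metis of_nat_mod)
  then show ?thesis by (simp add: mod_eq_dvd_iff)
qed

theorem mainTheorem17:
  fixes m n :: nat
  assumes "m \<ge> 3" and "n \<ge> 3"
  shows "ZN_distance_antimagic ({0..<m} \<times> {0..<n}) (strong_adj (cycle_adj m) (cycle_adj n))
         \<longleftrightarrow> odd m \<and> odd n"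
proof
  let ?V = "{0..<m} \<times> {0..<n}"
  let ?E = "strong_adj (cycle_adj m) (cycle_adj n)"
  have cV: "card ?V = m * n" by (simp add: card_cartesian_product)
  have finV: "finite ?V" by simp
  assume "ZN_distance_antimagic ?V ?E"
  then obtain f where bf: "bij_betw f ?V {0..<m*n}"
    and inw: "inj_on (\<lambda>x. (\<Sum>y\<in>nbhd ?V ?E x. f y) mod (m*n)) ?V"
    unfolding ZN_distance_antimagic_def ZN_distance_antimagic_labelling_def cV by blast
  define N where "N = m * n"
  define w where "w = (\<lambda>x. (\<Sum>y\<in>nbhd ?V ?E x. f y) mod N)"
  define T where "T = \<Sum>{0..<N}"
  have Npos: "N > 0" using assms unfolding N_def by simp
  have inw': "inj_on w ?V" using inw unfolding w_def N_def .
  have "w ` ?V \<subseteq> {0..<N}" unfolding w_def using Npos by auto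
  moreover have "card (w ` ?V) = N" using card_image[OF inw'] cV N_def by simp
  ultimately have img: "w ` ?V = {0..<N}"
    by (metis card_atLeastLessThan card_subset_eq finite_atLeastLessThan diff_zero)
  have sw: "(\<Sum>x\<in>?V. w x) = T"
    unfolding T_def img[symmetric] using sum.reindex[OF inw', of id] by simp
  have sf: "(\<Sum>x\<in>?V. f x) = T"
    unfolding T_def N_def using sum.reindex_bij_betw[OF bf, of id] by simp
  have "(\<Sum>x\<in>?V. \<Sum>y\<in>nbhd ?V ?E x. f y) = (\<Sum>y\<in>?V. f y * card (nbhd ?V ?E y))"
    by (rule double_count[OF finV sym_adj])
  also have "\<dots> = (\<Sum>y\<in>?V. f y * 8)"
    using card_nbhd[OF assms] by (intro sum.cong) auto
  also have "\<dots> = 8 * T" using sf by (simp add: sum_distrib_right[symmetric])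
  finally have s8: "(\<Sum>x\<in>?V. \<Sum>y\<in>nbhd ?V ?E x. f y) = 8 * T" .
  have "(\<Sum>x\<in>?V. w x) mod N = (\<Sum>x\<in>?V. \<Sum>y\<in>nbhd ?V ?E x. f y) mod N"
    unfolding w_def by (rule mod_sum_eq)
  then have "T mod N = (8 * T) mod N" using sw s8 by simp
  have g: "2 * T = N * (N - 1)" unfolding T_def by (rule double_gauss')
  have e: "8 * T = N * (4 * (N - 1))"
  proof -
    have "8 * T = 4 * (2 * T)" by simp
    also have "\<dots> = N * (4 * (N - 1))" unfolding g by (simp add: algebra_simps)
    finally show ?thesis .
  qed
  have "(8 * T) mod N = 0" unfolding e by simp
  with \<open>T mod N = (8 * T) mod N\<close> have "N dvd T" by (simp add: dvd_eq_mod_eq_0)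
  then obtain c where c: "T = N * c" by blast
  with g have "N * (2 * c) = N * (N - 1)" by (metis mult.left_commute)
  then have "2 * c = N - 1" using Npos by (metis mult_left_cancel neq0_conv)
  then have "odd N" using Npos by presburger
  then show "odd m \<and> odd n" unfolding N_def by simp
next
  let ?V = "{0..<m} \<times> {0..<n}"
  let ?E = "strong_adj (cycle_adj m) (cycle_adj n)"
  let ?f = "\<lambda>(a::nat, b::nat). n * a + b"
  have cV: "card ?V = m * n" by (simp add: card_cartesian_product)
  assume odd: "odd m \<and> odd n"
  have bij: "bij_betw ?f ?V {0..<m*n}" using assms by (intro bij_lab) simp
  define SA where "SA i = sum id (nb3 m i)" for i
  define SB where "SB j = sum id (nb3 n j)" for j
  have inj: "inj_on (\<lambda>x. (\<Sum>y\<in>nbhd ?V ?E x. ?f y) mod (m*n)) ?V"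
  proof (rule inj_onI)
    fix x x' assume xV: "x \<in> ?V" and x'V: "x' \<in> ?V"
      and eq: "(\<Sum>y\<in>nbhd ?V ?E x. ?f y) mod (m*n) = (\<Sum>y\<in>nbhd ?V ?E x'. ?f y) mod (m*n)"
    obtain i j where x: "x = (i, j)" "i < m" "j < n" using xV by auto
    obtain i' j' where x': "x' = (i', j')" "i' < m" "j' < n" using x'V by auto
    define s where "s = (\<Sum>y\<in>nbhd ?V ?E x. ?f y)"
    define s' where "s' = (\<Sum>y\<in>nbhd ?V ?E x'. ?f y)"
    have ws: "s + (n * i + j) = 3 * n * SA i + 3 * SB j"
      unfolding s_def SA_def SB_def x(1) by (rule weight_eq[OF assms x(2,3)])
    have ws': "s' + (n * i' + j') = 3 * n * SA i' + 3 * SB j'"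
      unfolding s'_def SA_def SB_def x'(1) by (rule weight_eq[OF assms x'(2,3)])
    have dmn: "int (m * n) dvd int s - int s'" using eq unfolding s_def s'_def by (rule int_cong)
    obtain qa where qa: "int (SA i) - 3 * int i = int m * qa"
      using int_cong[OF nb3_props(5)[OF assms(1) x(2)]] unfolding SA_def by auto
    obtain qa' where qa': "int (SA i') - 3 * int i' = int m * qa'"
      using int_cong[OF nb3_props(5)[OF assms(1) x'(2)]] unfolding SA_def by auto
    obtain qb where qb: "int (SB j) - 3 * int j = int n * qb"
      using int_cong[OF nb3_props(5)[OF assms(2) x(3)]] unfolding SB_def by auto
    obtain qb' where qb': "int (SB j') - 3 * int j' = int n * qb'"
      using int_cong[OF nb3_props(5)[OF assms(2) x'(3)]] unfolding SB_def by auto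
    have ws1: "int s = 8 * int n * int i + 8 * int j + 3 * int n * int m * qa + 3 * int n * qb"
    proof -
      have "int s + (int n * int i + int j) = 3 * int n * int (SA i) + 3 * int (SB j)"
        using arg_cong[OF ws, of int] by simp
      then show ?thesis using qa qb by (simp add: algebra_simps)
    qed
    have ws2: "int s' = 8 * int n * int i' + 8 * int j' + 3 * int n * int m * qa' + 3 * int n * qb'"
    proof -
      have "int s' + (int n * int i' + int j') = 3 * int n * int (SA i') + 3 * int (SB j')"
        using arg_cong[OF ws', of int] by simp
      then show ?thesis using qa' qb' by (simp add: algebra_simps)
    qed
    have "int n dvd int s - int s'" using dmn by (metis dvd_mult_right of_nat_mult)
    then have "int n dvd 8 * (int j - int j') + int n * (8 * int i - 8 * int i' + 3 * int m * (qa - qa') + 3 * (qb - qb'))"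
      unfolding ws1 ws2 by (simp add: algebra_simps)
    then have "int n dvd 8 * (int j - int j')"
      by (simp only: dvd_add_left_iff[OF dvd_triv_left])
    then have jj: "j = j'" using odd_cancel[of n j j'] odd x(3) x'(3) by simp
    have "int n * qb = int n * qb'" using qb qb' jj by metis
    then have qbb: "qb = qb'" using assms(2) by simp
    have "int s - int s' = int n * (8 * (int i - int i') + int m * (3 * (qa - qa')))"
      unfolding ws1 ws2 jj qbb by (simp add: algebra_simps)
    then have "int n * int m dvd int n * (8 * (int i - int i') + int m * (3 * (qa - qa')))"
      using dmn by (simp add: mult.commute)
    then have "int m dvd 8 * (int i - int i') + int m * (3 * (qa - qa'))"
      using assms(2) by simp
    then have "int m dvd 8 * (int i - int i')"
      by (simp only: dvd_add_left_iff[OF dvd_triv_left])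
    then have "i = i'" using odd_cancel[of m i i'] odd x(2) x'(2) by simp
    then show "x = x'" using x x' jj by simp
  qed
  show "ZN_distance_antimagic ?V ?E"
    unfolding ZN_distance_antimagic_def ZN_distance_antimagic_labelling_def cV
    using bij inj by blast
qed

end
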